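(* Let $I$ be a finite set, $\tau$ a total order of $I$, and $A=(A_1,\dots,A_\ell)$, $B$ set compositions of $I$ with $B$ refining $A$. Then $$\Big(\mathrm{Resf}^{\mathrm{UT}(\tau|_{A_1})}_{\mathrm{UL}(\tau|_{A_1},B|_{A_1})}\otimes\cdots\otimes\mathrm{Resf}^{\mathrm{UT}(\tau|_{A_\ell})}_{\mathrm{UL}(\tau|_{A_\ell},B|_{A_\ell})}\Big)\circ\mathrm{Resf}^{\mathrm{UT}(\tau)}_{\mathrm{UL}(\tau,A)}=\mathrm{Resf}^{\mathrm{UT}(\tau)}_{\mathrm{UL}(\tau,B)}$$ as maps $\mathsf{cf}(\mathrm{UT}(\tau))\to\mathsf{cf}(\mathrm{UL}(\tau,B))$.
   Context: Fix the finite field $\mathbb{F}_q$. For a finite set $I$, $\mathrm{GL}(I)$ is the group of invertible $I\times I$ matrices over $\mathbb{F}_q$ with identity $1_I$. A total order $\tau$ of $I$ is a reflexive, antisymmetric, transitive, total relation $\tau\subseteq I\times I$; $\tau|_J=\tau\cap(J\times J)$. For a relation $\pi$ containing the diagonal, $\mathrm{UT}(\pi)=\{X\in\mathrm{GL}(I):(X-1_I)_{i,j}\ne0\text{ only if }(i,j)\in\pi\}$. A set composition $A=(A_1,\dots,A_\ell)$ of $I$ is a sequence of pairwise disjoint nonempty sets with union $I$; for $J\subseteq I$, $C|_J$ is $(C_1\cap J,\dots)$ with empty sets removed; $B$ refines $A$ if $B=B|_{A_1}\cdots B|_{A_\ell}$ (concatenation). $\mathrm{Asc}(A)=\bigsqcup_{r<s}A_r\times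 A_s$, $\mathrm{Eq}(A)=\bigsqcup_rA_r\times A_r$. $\mathrm{UL}(\tau,A)=\mathrm{UT}(\tau\cap\mathrm{Eq}(A))$, $\mathrm{UR}(\tau,A)=\mathrm{UT}(\{(i,i)\}\cup(\tau\cap\mathrm{Asc}(A)))$, $\mathrm{UP}(\tau,A)=\mathrm{UT}(\tau\cap(\mathrm{Eq}(A)\cup\mathrm{Asc}(A)))=\mathrm{UL}(\tau,A)\ltimes\mathrm{UR}(\tau,A)$. Since $\mathrm{UL}(\tau,A)=\mathrm{UT}(\tau|_{A_1})\oplus\cdots\oplus\mathrm{UT}(\tau|_{A_\ell})$ (block diagonal), $\mathsf{cf}(\mathrm{UL}(\tau,A))$ is identified with $\bigotimes_r\mathsf{cf}(\mathrm{UT}(\tau|_{A_r}))$; similarly $\mathrm{UL}(\tau,B)=\bigoplus_r\mathrm{UL}(\tau|_{A_r},B|_{A_r})$. Here $\mathsf{cf}(G)$ denotes complex class functions on $G$, and $\mathrm{Resf}^{\mathrm{UT}(\tau)}_{\mathrm{UL}(\tau,A)}=\mathrm{Def}^{\mathrm{UP}(\tau,A)}_{\mathrm{UL}(\tau,A)}\circ\mathrm{Res}^{\mathrm{UT}(\tau)}_{\mathrm{UP}(\tau,A)}$, where $\mathrm{Res}$ is restriction and deflation is $\mathrm{Def}^{\mathrm{UP}(\tau,A)}_{\mathrm{UL}(\tau,A)}\psi(g)=\frac{1}{|\mathrm{UR}(\tau,A)|}\sum_{x\in\mathrm{UR}(\tau,A)}\psi(gx)$ for $g\in\mathrm{UL}(\tau,A)$.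 *)

theory Defs
  imports Complex_Main
begin

text \<open>Matrices indexed by a finite set I over a finite field 'f are modelled as
functions 'i => 'i => 'f that vanish outside I x I.\<close>

type_synonym ('i,'f) mat = "'i \<Rightarrow> 'i \<Rightarrow> 'f"

definition mat_on :: "'i set \<Rightarrow> ('i,'f::zero) mat \<Rightarrow> bool" where
  "mat_on I X \<longleftrightarrow> (\<forall>i j. (i,j) \<notin> I \<times> I \<longrightarrow> X i j = 0)"

definition one_mat :: "'i set \<Rightarrow> ('i,'f::{zero,one}) mat" where
  "one_mat I = (\<lambda>i j. if i \<in> I \<and> i = j then 1 else 0)"

definition mmul :: "'i set \<Rightarrow> ('i,'f::comm_semiring_1) mat \<Rightarrow> ('i,'f) mat \<Rightarrow> ('i,'f) mat" where
  "mmul I X Y = (\<lambda>i j. \<Sum>k\<in>I. X i k * Y k j)"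

definition GL :: "'i set \<Rightarrow> ('i,'f::field) mat set" where
  "GL I = {X. mat_on I X \<and> (\<exists>Y. mat_on I Y \<and> mmul I X Y = one_mat I \<and> mmul I Y X = one_mat I)}"

definition total_order_of :: "'i set \<Rightarrow> ('i \<times> 'i) set \<Rightarrow> bool" where
  "total_order_of I \<tau> \<longleftrightarrow> \<tau> \<subseteq> I \<times> I \<and> (\<forall>i\<in>I. (i,i) \<in> \<tau>)
     \<and> (\<forall>i j. (i,j) \<in> \<tau> \<and> (j,i) \<in> \<tau> \<longrightarrow> i = j)
     \<and> (\<forall>i j k. (i,j) \<in> \<tau> \<and> (j,k) \<in> \<tau> \<longrightarrow> (i,k) \<in> \<tau>)
     \<and> (\<forall>i\<in>I. \<forall>j\<in>I. (i,j) \<in> \<tau> \<or> (j,i) \<in> \<tau>)"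

definition rel_restr :: "('i \<times> 'i) set \<Rightarrow> 'i set \<Rightarrow> ('i \<times> 'i) set" where
  "rel_restr \<tau> J = \<tau> \<inter> (J \<times> J)"

definition UT :: "'i set \<Rightarrow> ('i \<times> 'i) set \<Rightarrow> ('i,'f::field) mat set" where
  "UT I \<pi> = {X \<in> GL I. \<forall>i j. (X i j - one_mat I i j) \<noteq> 0 \<longrightarrow> (i,j) \<in> \<pi>}"

definition set_composition :: "'i set \<Rightarrow> 'i set list \<Rightarrow> bool" where
  "set_composition I A \<longleftrightarrow> (\<forall>r < length A. A ! r \<noteq> {})
     \<and> (\<forall>r s. r < s \<and> s < length A \<longrightarrow> A ! r \<inter> A ! s = {})
     \<and> \<Union>(set A) = I"

definition comp_restr :: "'i set list \<Rightarrow> 'i set \<Rightarrow> 'i set list" where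
  "comp_restr C J = filter (\<lambda>X. X \<noteq> {}) (map (\<lambda>X. X \<inter> J) C)"

definition refines :: "'i set list \<Rightarrow> 'i set list \<Rightarrow> bool" where
  "refines B A \<longleftrightarrow> B = concat (map (comp_restr B) A)"

definition Asc :: "'i set list \<Rightarrow> ('i \<times> 'i) set" where
  "Asc A = {(i,j). \<exists>r s. r < s \<and> s < length A \<and> i \<in> A ! r \<and> j \<in> A ! s}"

definition Eq :: "'i set list \<Rightarrow> ('i \<times> 'i) set" where
  "Eq A = {(i,j). \<exists>r < length A. i \<in> A ! r \<and> j \<in> A ! r}"

definition UL :: "'i set \<Rightarrow> ('i \<times> 'i) set \<Rightarrow> 'i set list \<Rightarrow> ('i,'f::field) mat set" where
  "UL I \<tau> A = UT I (\<tau> \<inter> Eq A)"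

definition UR :: "'i set \<Rightarrow> ('i \<times> 'i) set \<Rightarrow> 'i set list \<Rightarrow> ('i,'f::field) mat set" where
  "UR I \<tau> A = UT I (Id_on I \<union> (\<tau> \<inter> Asc A))"

definition UP :: "'i set \<Rightarrow> ('i \<times> 'i) set \<Rightarrow> 'i set list \<Rightarrow> ('i,'f::field) mat set" where
  "UP I \<tau> A = UT I (\<tau> \<inter> (Eq A \<union> Asc A))"

definition class_fun :: "'i set \<Rightarrow> ('i,'f::field) mat set \<Rightarrow> (('i,'f) mat \<Rightarrow> complex) \<Rightarrow> bool" where
  "class_fun I G \<psi> \<longleftrightarrow> (\<forall>g\<in>G. \<forall>x\<in>G. \<forall>y\<in>G. mmul I x y = one_mat I \<longrightarrow>
       \<psi> (mmul I (mmul I x g) y) = \<psi> g)"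

definition Res :: "('i,'f) mat set \<Rightarrow> (('i,'f) mat \<Rightarrow> complex) \<Rightarrow> (('i,'f) mat \<Rightarrow> complex)" where
  "Res H \<psi> = (\<lambda>g. if g \<in> H then \<psi> g else 0)"

definition Deflate :: "'i set \<Rightarrow> ('i \<times> 'i) set \<Rightarrow> 'i set list
    \<Rightarrow> (('i,'f::{field,finite}) mat \<Rightarrow> complex) \<Rightarrow> (('i,'f) mat \<Rightarrow> complex)" where
  "Deflate I \<tau> A \<psi> = (\<lambda>g. (1 / of_nat (card (UR I \<tau> A :: ('i,'f) mat set))) * (\<Sum>x\<in>UR I \<tau> A. \<psi> (mmul I g x)))"

definition Resf :: "'i set \<Rightarrow> ('i \<times> 'i) set \<Rightarrow> 'i set list
    \<Rightarrow> (('i,'f::{field,finite}) mat \<Rightarrow> complex) \<Rightarrow> (('i,'f) mat \<Rightarrow> complex)" where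
  "Resf I \<tau> A = Deflate I \<tau> A \<circ> Res (UP I \<tau> A)"

text \<open>Tensor products of maps: cf(UL(tau,A)) = tensor of cf(UT(tau|A_r)) is realised by
viewing functions on block-diagonal matrices as functions of the diagonal blocks.
A map F on functions of matrices over J acts in the block J: freeze all other blocks.\<close>
definition blk_apply :: "'i set \<Rightarrow> ((('i,'f::zero) mat \<Rightarrow> complex) \<Rightarrow> (('i,'f) mat \<Rightarrow> complex))
    \<Rightarrow> (('i,'f) mat \<Rightarrow> complex) \<Rightarrow> (('i,'f) mat \<Rightarrow> complex)" where
  "blk_apply J F \<psi> = (\<lambda>h. F (\<lambda>g. \<psi> (\<lambda>i j. if i \<in> J \<and> j \<in> J then g i j else h i j))
                            (\<lambda>i j. if i \<in> J \<and> j \<in> J then h i j else 0))"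

definition tensor_maps :: "('i set \<times> ((('i,'f::zero) mat \<Rightarrow> complex) \<Rightarrow> (('i,'f) mat \<Rightarrow> complex))) list
    \<Rightarrow> (('i,'f) mat \<Rightarrow> complex) \<Rightarrow> (('i,'f) mat \<Rightarrow> complex)" where
  "tensor_maps Fs = foldr (\<lambda>(J,F) acc. blk_apply J F \<circ> acc) Fs id"

end

theory Submission
  imports Defs
begin
lemma Asc_Nil[simp]: "Asc [] = {}" by (simp add: Asc_def)
lemma Eq_Nil[simp]: "Eq [] = {}" by (simp add: Eq_def)

lemma Eq_set: "Eq C = {(i,j). \<exists>X\<in>set C. i \<in> X \<and> j \<in> X}"
proof -
  have "(\<exists>r<length C. i \<in> C ! r \<and> j \<in> C ! r) \<longleftrightarrow> (\<exists>X\<in>set C. i \<in> X \<and> j \<in> X)" for i j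
  proof
    assume "\<exists>r<length C. i \<in> C ! r \<and> j \<in> C ! r"
    then obtain r where "r < length C" "i \<in> C ! r" "j \<in> C ! r" by blast
    then show "\<exists>X\<in>set C. i \<in> X \<and> j \<in> X" using nth_mem by blast
  next
    assume "\<exists>X\<in>set C. i \<in> X \<and> j \<in> X"
    then obtain X where "X \<in> set C" "i \<in> X" "j \<in> X" by blast
    then obtain r where "r < length C" "C ! r = X" by (meson in_set_conv_nth)
    then show "\<exists>r<length C. i \<in> C ! r \<and> j \<in> C ! r" using \<open>i \<in> X\<close> \<open>j \<in> X\<close> by blast
  qed
  then show ?thesis unfolding Eq_def by blast
qed

lemma Eq_Cons: "Eq (X # C) = X \<times> X \<union> Eq C"
  by (auto simp: Eq_set)

lemma Asc_Cons: "Asc (X # C) = X \<times> \<Union>(set C) \<union> Asc C"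
proof -
  have "(\<exists>r s. r < s \<and> s < length (X#C) \<and> i \<in> (X#C) ! r \<and> j \<in> (X#C) ! s) \<longleftrightarrow>
        (i \<in> X \<and> j \<in> \<Union>(set C)) \<or> (\<exists>r s. r < s \<and> s < length C \<and> i \<in> C ! r \<and> j \<in> C ! s)" (is "?L \<longleftrightarrow> ?R") for i j
  proof
    assume ?L
    then obtain r s where rs: "r < s" "s < length (X#C)" "i \<in> (X#C) ! r" "j \<in> (X#C) ! s" by blast
    then obtain s' where s': "s = Suc s'" by (cases s) auto
    show ?R
    proof (cases r)
      case 0 then show ?thesis using rs s' nth_mem[of s' C] by auto
    next
      case (Suc r') then show ?thesis using rs s' by (intro disjI2 exI[of _ r'] exI[of _ s']) auto
    qed
  next
    assume ?R
    then show ?L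
    proof
      assume "i \<in> X \<and> j \<in> \<Union>(set C)"
      then obtain s where "s < length C" "j \<in> C ! s" "i \<in> X" by (auto simp: in_set_conv_nth)
      then show ?L by (intro exI[of _ 0] exI[of _ "Suc s"]) auto
    next
      assume "\<exists>r s. r < s \<and> s < length C \<and> i \<in> C ! r \<and> j \<in> C ! s"
      then obtain r s where "r < s \<and> s < length C \<and> i \<in> C ! r \<and> j \<in> C ! s" by blast
      then show ?L by (intro exI[of _ "Suc r"] exI[of _ "Suc s"]) auto
    qed
  qed
  then show ?thesis unfolding Asc_def by auto
qed

lemma Eq_append: "Eq (C @ D) = Eq C \<union> Eq D"
  by (induction C) (auto simp: Eq_Cons)

lemma Asc_append: "Asc (C @ D) = Asc C \<union> Asc D \<union> \<Union>(set C) \<times> \<Union>(set D)"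
  by (induction C) (auto simp: Asc_Cons)

lemma Eq_sub: "Eq C \<subseteq> \<Union>(set C) \<times> \<Union>(set C)"
  by (induction C) (auto simp: Eq_Cons)
lemma Asc_sub: "Asc C \<subseteq> \<Union>(set C) \<times> \<Union>(set C)"
  by (induction C) (auto simp: Asc_Cons)

lemma comp_restr_Nil[simp]: "comp_restr [] J = []" by (simp add: comp_restr_def)
lemma comp_restr_Cons: "comp_restr (X # C) J = (if X \<inter> J = {} then [] else [X \<inter> J]) @ comp_restr C J"
  by (simp add: comp_restr_def)
lemma Union_comp_restr: "\<Union>(set (comp_restr C J)) = \<Union>(set C) \<inter> J"
  by (auto simp: comp_restr_def)

lemma Eq_comp_restr: "Eq (comp_restr C J) = Eq C \<inter> J \<times> J"
  by (induction C) (auto simp: comp_restr_Cons Eq_Cons)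
lemma Asc_comp_restr: "Asc (comp_restr C J) = Asc C \<inter> J \<times> J"
  by (induction C) (auto simp: comp_restr_Cons Asc_Cons Union_comp_restr)

lemma refine_Eq:
  assumes "\<And>a. a \<in> set A \<Longrightarrow> \<Union>(set (f a)) \<subseteq> a"
  shows "Eq (concat (map f A)) \<subseteq> Eq A"
  using assms
proof (induction A)
  case (Cons a A)
  have "Eq (f a) \<subseteq> a \<times> a" using Eq_sub[of "f a"] Cons.prems by auto
  then show ?case using Cons by (auto simp: Eq_append Eq_Cons)
qed simp

lemma refine_Asc1:
  assumes "\<And>a. a \<in> set A \<Longrightarrow> \<Union>(set (f a)) \<subseteq> a"
  shows "Asc (concat (map f A)) \<subseteq> Eq A \<union> Asc A"
  using assms
proof (induction A)
  case (Cons a A)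
  have h1: "Asc (f a) \<subseteq> a \<times> a" using Asc_sub[of "f a"] Cons.prems by auto
  have h2: "\<Union>(set (concat (map f A))) \<subseteq> \<Union>(set A)" using Cons.prems by auto
  have h3: "\<Union>(set (f a)) \<subseteq> a" using Cons.prems by auto
  have h4: "Asc (concat (map f A)) \<subseteq> Eq A \<union> Asc A" using Cons by auto
  have "Asc (concat (map f (a # A))) = Asc (f a) \<union> Asc (concat (map f A)) \<union> \<Union>(set (f a)) \<times> \<Union>(set (concat (map f A)))"
    by (simp add: Asc_append)
  also have "\<dots> \<subseteq> a \<times> a \<union> (Eq A \<union> Asc A) \<union> a \<times> \<Union>(set A)"
    using h1 h2 h3 h4 by blast
  also have "\<dots> \<subseteq> Eq (a # A) \<union> Asc (a # A)" by (auto simp: Eq_Cons Asc_Cons)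
  finally show ?case .
qed simp

lemma refine_Asc2:
  assumes "\<And>a. a \<in> set A \<Longrightarrow> \<Union>(set (f a)) = a"
  shows "Asc A \<subseteq> Asc (concat (map f A))"
  using assms
proof (induction A)
  case (Cons a A)
  have "\<Union>(set (concat (map f A))) = (\<Union>a\<in>set A. \<Union>(set (f a)))" by auto
  also have "\<dots> = \<Union>(set A)" using Cons.prems by simp
  finally have "\<Union>(set (concat (map f A))) = \<Union>(set A)" .
  then show ?case using Cons Cons.prems[of a] by (auto simp: Asc_append Asc_Cons)
qed simp

lemma finite_mat_on:
  assumes fI: "finite I"
  shows "finite {X :: ('i,'f::{finite,zero}) mat. mat_on I X}"
proof -
  let ?S = "{f :: 'i\<times>'i \<Rightarrow> 'f. \<forall>x. (x \<in> I\<times>I \<longrightarrow> f x \<in> UNIV) \<and> (x \<notin> I\<times>I \<longrightarrow> f x = 0)}"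
  have "finite ?S" by (rule finite_set_of_finite_funs) (use fI in auto)
  moreover have "{X :: ('i,'f) mat. mat_on I X} \<subseteq> (\<lambda>f i j. f (i,j)) ` ?S"
  proof
    fix X :: "('i,'f) mat" assume "X \<in> {X. mat_on I X}"
    then have "case_prod X \<in> ?S" by (auto simp: mat_on_def)
    moreover have "X = (\<lambda>f i j. f (i,j)) (case_prod X)" by simp
    ultimately show "X \<in> (\<lambda>f i j. f (i,j)) ` ?S" by blast
  qed
  ultimately show ?thesis by (meson finite_imageI finite_subset)
qed

lemma mat_onD: "mat_on I X \<Longrightarrow> i \<notin> I \<or> j \<notin> I \<Longrightarrow> X i j = 0"
  by (auto simp: mat_on_def)

lemma one_mat_on: "mat_on I (one_mat I)"
  by (auto simp: mat_on_def one_mat_def)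

lemma mmul_mat_on: "mat_on I X \<Longrightarrow> mat_on I Y \<Longrightarrow> mat_on I (mmul I X Y)"
  unfolding mat_on_def mmul_def by (auto intro!: sum.neutral)

lemma mmul_assoc: "mmul I (mmul I X Y) Z = mmul I X (mmul I Y Z)"
proof (intro ext)
  fix i j
  have "mmul I (mmul I X Y) Z i j = (\<Sum>k\<in>I. \<Sum>l\<in>I. X i l * Y l k * Z k j)"
    by (simp add: mmul_def sum_distrib_right)
  also have "\<dots> = (\<Sum>l\<in>I. \<Sum>k\<in>I. X i l * Y l k * Z k j)" by (rule sum.swap)
  also have "\<dots> = mmul I X (mmul I Y Z) i j"
    by (simp add: mmul_def sum_distrib_left mult.assoc)
  finally show "mmul I (mmul I X Y) Z i j = mmul I X (mmul I Y Z) i j" .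
qed

lemma sum_one_left:
  fixes g :: "'i \<Rightarrow> 'f::comm_semiring_1"
  assumes "finite I"
  shows "(\<Sum>k\<in>I. one_mat I i k * g k) = (if i \<in> I then g i else 0)"
proof -
  have "(\<Sum>k\<in>I. one_mat I i k * g k) = (\<Sum>k\<in>I. if k = i then (if i \<in> I then g i else 0) else 0)"
    by (rule sum.cong) (auto simp: one_mat_def)
  also have "\<dots> = (if i \<in> I then g i else 0)" using assms by (simp add: sum.delta')
  finally show ?thesis .
qed

lemma sum_one_right:
  fixes g :: "'i \<Rightarrow> 'f::comm_semiring_1"
  assumes "finite I"
  shows "(\<Sum>k\<in>I. g k * one_mat I k j) = (if j \<in> I then g j else 0)"
proof -
  have "(\<Sum>k\<in>I. g k * one_mat I k j) = (\<Sum>k\<in>I. if k = j then (if j \<in> I then g j else 0) else 0)"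
    by (rule sum.cong) (auto simp: one_mat_def)
  also have "\<dots> = (if j \<in> I then g j else 0)" using assms by (simp add: sum.delta')
  finally show ?thesis .
qed

lemma mmul_row_id:
  assumes "finite I" "mat_on I Y" "\<And>k. X i k = one_mat I i k"
  shows "mmul I X Y i j = Y i j"
  using assms sum_one_left[OF assms(1), of i "\<lambda>k. Y k j"] by (auto simp: mmul_def mat_on_def)

lemma mmul_col_id:
  assumes "finite I" "mat_on I X" "\<And>k. Y k j = one_mat I k j"
  shows "mmul I X Y i j = X i j"
  using assms sum_one_right[OF assms(1), of "\<lambda>k. X i k" j] by (auto simp: mmul_def mat_on_def)

lemma mmul_one_left: "finite I \<Longrightarrow> mat_on I Y \<Longrightarrow> mmul I (one_mat I) Y = Y"
  by (intro ext mmul_row_id) auto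

lemma mmul_one_right: "finite I \<Longrightarrow> mat_on I X \<Longrightarrow> mmul I X (one_mat I) = X"
  by (intro ext mmul_col_id) auto

lemma GL_mat_on: "X \<in> GL I \<Longrightarrow> mat_on I X"
  by (simp add: GL_def)

lemma GL_inv: "X \<in> GL I \<Longrightarrow> \<exists>Y. mat_on I Y \<and> mmul I X Y = one_mat I \<and> mmul I Y X = one_mat I"
  by (simp add: GL_def)

lemma one_GL: "finite I \<Longrightarrow> one_mat I \<in> (GL I :: ('i,'f::field) mat set)"
  unfolding GL_def using one_mat_on mmul_one_left[OF _ one_mat_on] by blast

lemma GL_mmul:
  assumes fI: "finite I" and X: "X \<in> GL I" and Y: "Y \<in> GL I"
  shows "mmul I X Y \<in> (GL I :: ('i,'f::field) mat set)"
proof -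
  obtain X' where X': "mat_on I X'" "mmul I X X' = one_mat I" "mmul I X' X = one_mat I" using GL_inv[OF X] by blast
  obtain Y' where Y': "mat_on I Y'" "mmul I Y Y' = one_mat I" "mmul I Y' Y = one_mat I" using GL_inv[OF Y] by blast
  have mX: "mat_on I X" and mY: "mat_on I Y" using X Y by (auto simp: GL_mat_on)
  have "mmul I (mmul I X Y) (mmul I Y' X') = one_mat I"
    by (simp add: mmul_assoc, subst mmul_assoc[symmetric]) (simp add: Y' X' mmul_one_left fI)
  moreover have "mmul I (mmul I Y' X') (mmul I X Y) = one_mat I"
    by (simp add: mmul_assoc, subst mmul_assoc[symmetric]) (simp add: Y' X' mmul_one_left fI mY)
  ultimately show ?thesis unfolding GL_def using mmul_mat_on[OF mX mY] mmul_mat_on[OF Y'(1) X'(1)] by blast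
qed

lemma GL_cancel_right:
  assumes fI: "finite I" and s: "s \<in> GL I" and "mat_on I x" "mat_on I y"
    and eq: "mmul I x s = mmul I y (s :: ('i,'f::field) mat)"
  shows "x = y"
proof -
  obtain t where t: "mmul I s t = one_mat I" using GL_inv[OF s] by blast
  have "mmul I (mmul I x s) t = mmul I (mmul I y s) t" using eq by simp
  then have "mmul I x (mmul I s t) = mmul I y (mmul I s t)" by (simp only: mmul_assoc)
  then show ?thesis using t by (simp add: mmul_one_right[OF fI assms(3)] mmul_one_right[OF fI assms(4)])
qed

lemma GL_cancel_left:
  assumes fI: "finite I" and s: "s \<in> GL I" and "mat_on I x" "mat_on I y"
    and eq: "mmul I s x = mmul I s (y :: ('i,'f::field) mat)"
  shows "x = y"
proof -
  obtain t where t: "mmul I t s = one_mat I" using GL_inv[OF s] by blast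
  have "mmul I t (mmul I s x) = mmul I t (mmul I s y)" using eq by simp
  then have "mmul I (mmul I t s) x = mmul I (mmul I t s) y" by (simp only: mmul_assoc)
  then show ?thesis using t by (simp add: mmul_one_left[OF fI assms(3)] mmul_one_left[OF fI assms(4)])
qed

lemma UT_GL: "X \<in> UT I \<pi> \<Longrightarrow> X \<in> GL I" by (simp add: UT_def)

lemma UT_out: "X \<in> UT I \<pi> \<Longrightarrow> (i,k) \<notin> \<pi> \<Longrightarrow> X i k = one_mat I i k"
  unfolding UT_def by auto

lemma UT_iff: "X \<in> UT I \<pi> \<longleftrightarrow> X \<in> GL I \<and> (\<forall>i j. (i,j) \<notin> \<pi> \<longrightarrow> X i j = one_mat I i j)"
  unfolding UT_def by auto

lemma UT_mono: "\<pi> \<subseteq> \<pi>' \<Longrightarrow> UT I \<pi> \<subseteq> UT I \<pi>'"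
  unfolding UT_def by auto

lemma one_UT: "finite I \<Longrightarrow> one_mat I \<in> (UT I \<pi> :: ('i,'f::field) mat set)"
  unfolding UT_def using one_GL by auto

lemma UT_mmul:
  assumes fI: "finite I" and tr: "trans \<pi>" and X: "X \<in> UT I \<pi>" and Y: "Y \<in> UT I \<pi>"
  shows "mmul I X Y \<in> (UT I \<pi> :: ('i,'f::field) mat set)"
  unfolding UT_iff
proof (intro conjI allI impI)
  show "mmul I X Y \<in> GL I" using GL_mmul[OF fI UT_GL[OF X] UT_GL[OF Y]] .
  fix i j assume ij: "(i,j) \<notin> \<pi>"
  have "mmul I X Y i j = (\<Sum>k\<in>I. one_mat I i k * one_mat I k j)"
    unfolding mmul_def
  proof (rule sum.cong[OF refl])
    fix k assume "k \<in> I"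
    show "X i k * Y k j = one_mat I i k * one_mat I k j"
    proof (cases "(i,k) \<in> \<pi>")
      case True
      then have "(k,j) \<notin> \<pi>" using tr ij by (meson transD)
      then have "Y k j = one_mat I k j" using UT_out[OF Y] by blast
      moreover have "k \<noteq> j" using True ij by blast
      ultimately show ?thesis by (simp add: one_mat_def)
    next
      case False
      then have Xi: "X i k = one_mat I i k" using UT_out[OF X] by blast
      show ?thesis
      proof (cases "(k,j) \<in> \<pi>")
        case True
        then have "i \<noteq> k" using ij by blast
        then show ?thesis by (simp add: Xi one_mat_def)
      next
        case False
        then show ?thesis using Xi UT_out[OF Y] by simp
      qed
    qed
  qed
  also have "\<dots> = one_mat I i j" by (subst sum_one_left[OF fI]) (auto simp: one_mat_def)
  finally show "mmul I X Y i j = one_mat I i j" .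
qed

definition fgrp :: "'i set \<Rightarrow> ('i,'f::field) mat set \<Rightarrow> bool" where
  "fgrp I S \<longleftrightarrow> finite S \<and> S \<subseteq> GL I \<and> one_mat I \<in> S \<and> (\<forall>x\<in>S. \<forall>y\<in>S. mmul I x y \<in> S)"

lemma finite_GL: "finite I \<Longrightarrow> finite (GL I :: ('i,'f::{field,finite}) mat set)"
  by (rule finite_subset[OF _ finite_mat_on]) (auto simp: GL_def)

lemma UT_fgrp:
  assumes "finite I" "trans \<pi>"
  shows "fgrp I (UT I \<pi> :: ('i,'f::{field,finite}) mat set)"
  unfolding fgrp_def
proof (intro conjI ballI)
  show "UT I \<pi> \<subseteq> GL I" using UT_GL by blast
  then show "finite (UT I \<pi> :: ('i,'f) mat set)" using finite_subset finite_GL[OF assms(1)] by blast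
  show "one_mat I \<in> (UT I \<pi> :: ('i,'f) mat set)" using one_UT[OF assms(1)] .
  fix x y :: "('i,'f) mat" assume "x \<in> UT I \<pi>" "y \<in> UT I \<pi>"
  then show "mmul I x y \<in> UT I \<pi>" using UT_mmul[OF assms] by blast
qed

lemma fgrp_sum_right:
  assumes fI: "finite I" and S: "fgrp I S" and s: "s \<in> S"
  shows "(\<Sum>x\<in>S. f (mmul I x s)) = sum f S"
proof -
  have fin: "finite S" and sub: "S \<subseteq> GL I" and cl: "\<forall>x\<in>S. \<forall>y\<in>S. mmul I x y \<in> S"
    using S by (auto simp: fgrp_def)
  have inj: "inj_on (\<lambda>x. mmul I x s) S"
    by (rule inj_onI) (use GL_cancel_right[OF fI] sub s GL_mat_on in blast)
  have "(\<lambda>x. mmul I x s) ` S = S" by (rule endo_inj_surj[OF fin _ inj]) (use cl s in auto)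
  then have "sum f S = sum f ((\<lambda>x. mmul I x s) ` S)" by simp
  also have "\<dots> = (\<Sum>x\<in>S. f (mmul I x s))" by (rule sum.reindex[OF inj, unfolded comp_def])
  finally show ?thesis by simp
qed

lemma fgrp_sum_left:
  assumes fI: "finite I" and S: "fgrp I S" and s: "s \<in> S"
  shows "(\<Sum>x\<in>S. f (mmul I s x)) = sum f S"
proof -
  have fin: "finite S" and sub: "S \<subseteq> GL I" and cl: "\<forall>x\<in>S. \<forall>y\<in>S. mmul I x y \<in> S"
    using S by (auto simp: fgrp_def)
  have inj: "inj_on (\<lambda>x. mmul I s x) S"
    by (rule inj_onI) (use GL_cancel_left[OF fI] sub s GL_mat_on in blast)
  have "(\<lambda>x. mmul I s x) ` S = S" by (rule endo_inj_surj[OF fin _ inj]) (use cl s in auto)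
  then have "sum f S = sum f ((\<lambda>x. mmul I s x) ` S)" by simp
  also have "\<dots> = (\<Sum>x\<in>S. f (mmul I s x))" by (rule sum.reindex[OF inj, unfolded comp_def])
  finally show ?thesis by simp
qed

lemma fgrp_inv:
  assumes fI: "finite I" and S: "fgrp I S" and x: "x \<in> S"
  shows "\<exists>y\<in>S. mmul I x y = one_mat I \<and> mmul I y x = one_mat I"
proof -
  have fin: "finite S" and sub: "S \<subseteq> GL I" and cl: "\<forall>x\<in>S. \<forall>y\<in>S. mmul I x y \<in> S"
    and one: "one_mat I \<in> S" using S by (auto simp: fgrp_def)
  have inj: "inj_on (\<lambda>y. mmul I x y) S"
    by (rule inj_onI) (use GL_cancel_left[OF fI] sub x GL_mat_on in blast)
  have "(\<lambda>y. mmul I x y) ` S = S" by (rule endo_inj_surj[OF fin _ inj]) (use cl x in auto)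
  then obtain y where y: "y \<in> S" "mmul I x y = one_mat I" using one by (metis imageE)
  obtain t where t: "mat_on I t" "mmul I t x = one_mat I" using GL_inv[of x I] sub x by blast
  have "t = mmul I t (mmul I x y)" using y t by (simp add: mmul_one_right fI)
  also have "\<dots> = mmul I (mmul I t x) y" by (simp only: mmul_assoc)
  also have "\<dots> = y" using y t sub by (simp add: mmul_one_left fI GL_mat_on subsetD)
  finally show ?thesis using y t by auto
qed

definition avg :: "('i,'f) mat set \<Rightarrow> (('i,'f) mat \<Rightarrow> complex) \<Rightarrow> complex" where
  "avg S f = 1 / of_nat (card S) * (\<Sum>x\<in>S. f x)"

lemma fgrp_card: "fgrp I S \<Longrightarrow> card S > 0"
  unfolding fgrp_def using card_gt_0_iff by blast

lemma avg_factor: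
  fixes f :: "('i,'f::{field,finite}) mat \<Rightarrow> complex"
  assumes fI: "finite I" and S: "fgrp I S" and E: "fgrp I E" and U: "fgrp I U"
    and ES: "E \<subseteq> S" and US: "U \<subseteq> S"
    and fac: "\<forall>w\<in>S. \<exists>e\<in>E. \<exists>u\<in>U. w = mmul I e u"
  shows "avg E (\<lambda>e. avg U (\<lambda>u. f (mmul I e u))) = avg S f"
proof -
  define g where "g v = (\<Sum>u\<in>U. f (mmul I v u))" for v
  have c1: "(\<Sum>w\<in>S. g w) = of_nat (card U) * sum f S"
  proof -
    have "(\<Sum>w\<in>S. g w) = (\<Sum>u\<in>U. \<Sum>w\<in>S. f (mmul I w u))" unfolding g_def by (rule sum.swap)
    also have "\<dots> = (\<Sum>u\<in>U. sum f S)"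
    proof (rule sum.cong[OF refl])
      fix u assume "u \<in> U"
      then show "(\<Sum>w\<in>S. f (mmul I w u)) = sum f S" using fgrp_sum_right[OF fI S, of u f] US by blast
    qed
    finally show ?thesis by simp
  qed
  have gr: "g (mmul I v u0) = g v" if "u0 \<in> U" for v u0
  proof -
    have "g (mmul I v u0) = (\<Sum>u\<in>U. f (mmul I v (mmul I u0 u)))" unfolding g_def by (simp add: mmul_assoc)
    also have "\<dots> = g v" unfolding g_def by (rule fgrp_sum_left[OF fI U that, of "\<lambda>x. f (mmul I v x)"])
    finally show ?thesis .
  qed
  have c2: "(\<Sum>e\<in>E. g (mmul I e w)) = sum g E" if "w \<in> S" for w
  proof -
    from fac[rule_format, OF that] obtain e0 where e0E: "e0 \<in> E" and ex: "\<exists>u\<in>U. w = mmul I e0 u" ..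
    from ex obtain u0 where u0: "u0 \<in> U" "w = mmul I e0 u0" ..
    note e0 = e0E u0
    have "(\<Sum>e\<in>E. g (mmul I e w)) = (\<Sum>e\<in>E. g (mmul I e e0))"
      by (rule sum.cong[OF refl]) (simp add: e0(3) mmul_assoc[symmetric] gr[OF e0(2)])
    also have "\<dots> = sum g E" by (rule fgrp_sum_right[OF fI E e0(1)])
    finally show ?thesis .
  qed
  have c3: "of_nat (card E) * (\<Sum>w\<in>S. g w) = of_nat (card S) * sum g E"
  proof -
    have "of_nat (card E) * (\<Sum>w\<in>S. g w) = (\<Sum>e\<in>E. \<Sum>w\<in>S. g w)" by simp
    also have "\<dots> = (\<Sum>e\<in>E. \<Sum>w\<in>S. g (mmul I e w))"
    proof (rule sum.cong[OF refl])
      fix e assume "e \<in> E"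
      then show "(\<Sum>w\<in>S. g w) = (\<Sum>w\<in>S. g (mmul I e w))" using fgrp_sum_left[OF fI S, of e g] ES by auto
    qed
    also have "\<dots> = (\<Sum>w\<in>S. \<Sum>e\<in>E. g (mmul I e w))" by (rule sum.swap)
    also have "\<dots> = (\<Sum>w\<in>S. sum g E)" using c2 by simp
    finally show ?thesis by simp
  qed
  have pE: "card E > 0" and pU: "card U > 0" and pS: "card S > 0" using fgrp_card E U S by blast+
  define cE :: complex where "cE = of_nat (card E)"
  define cU :: complex where "cU = of_nat (card U)"
  define cS :: complex where "cS = of_nat (card S)"
  have nz: "cE \<noteq> 0" "cU \<noteq> 0" "cS \<noteq> 0" using pE pU pS by (auto simp: cE_def cU_def cS_def)
  have e1: "avg E (\<lambda>e. avg U (\<lambda>u. f (mmul I e u))) = 1 / cE * (1 / cU * sum g E)"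
    unfolding avg_def g_def cE_def cU_def by (simp only: sum_distrib_left[symmetric])
  have e2: "cS * sum g E = cE * (cU * sum f S)" using c1 c3 unfolding cE_def cU_def cS_def by simp
  have e3: "sum g E = cE * cU * sum f S / cS" using e2 nz by (simp add: eq_divide_eq mult.assoc mult.commute)
  show ?thesis unfolding e1 e3 using nz by (simp add: avg_def cS_def[symmetric])
qed

definition restr :: "'i set \<Rightarrow> ('i,'f::zero) mat \<Rightarrow> ('i,'f) mat" where
  "restr K Y = (\<lambda>i j. if i \<in> K \<and> j \<in> K then Y i j else 0)"

definition ext :: "'i set \<Rightarrow> 'i set \<Rightarrow> ('i,'f::{zero,one}) mat \<Rightarrow> ('i,'f) mat" where
  "ext I K x = (\<lambda>i j. if i \<in> K \<and> j \<in> K then x i j else one_mat I i j)"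

definition bd :: "'i set \<Rightarrow> ('i,'f::zero) mat \<Rightarrow> bool" where
  "bd K Y \<longleftrightarrow> (\<forall>i j. (i \<in> K) \<noteq> (j \<in> K) \<longrightarrow> Y i j = 0)"

lemma restr_mat_on: "mat_on K (restr K Y)"
  by (simp add: mat_on_def restr_def)

lemma ext_mat_on: "K \<subseteq> I \<Longrightarrow> mat_on I (ext I K x)"
  by (auto simp: mat_on_def ext_def one_mat_def)

lemma restr_GL:
  assumes fI: "finite I" and KI: "K \<subseteq> I" and Y: "Y \<in> GL I" and b: "bd K Y"
  shows "restr K Y \<in> (GL K :: ('i,'f::field) mat set)"
proof -
  obtain Z where Z: "mat_on I Z" "mmul I Y Z = one_mat I" "mmul I Z Y = one_mat I" using GL_inv[OF Y] by blast
  have fK: "finite K" using fI KI finite_subset by blast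
  have m1: "mmul K (restr K Y) (restr K Z) = one_mat K"
  proof (intro ext)
    fix i j
    show "mmul K (restr K Y) (restr K Z) i j = one_mat K i j"
    proof (cases "i \<in> K \<and> j \<in> K")
      case True
      have "mmul K (restr K Y) (restr K Z) i j = (\<Sum>k\<in>K. Y i k * Z k j)"
        unfolding mmul_def restr_def by (rule sum.cong) (use True in auto)
      also have "\<dots> = (\<Sum>k\<in>I. Y i k * Z k j)"
        by (rule sum.mono_neutral_left[OF fI KI]) (use b True in \<open>auto simp: bd_def\<close>)
      also have "\<dots> = one_mat I i j" using fun_cong[OF fun_cong[OF Z(2)], of i j] unfolding mmul_def by simp
      finally show ?thesis using True KI by (auto simp: one_mat_def)
    next
      case False
      then show ?thesis by (auto simp: mmul_def restr_def one_mat_def)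
    qed
  qed
  have m2: "mmul K (restr K Z) (restr K Y) = one_mat K"
  proof (intro ext)
    fix i j
    show "mmul K (restr K Z) (restr K Y) i j = one_mat K i j"
    proof (cases "i \<in> K \<and> j \<in> K")
      case True
      have "mmul K (restr K Z) (restr K Y) i j = (\<Sum>k\<in>K. Z i k * Y k j)"
        unfolding mmul_def restr_def by (rule sum.cong) (use True in auto)
      also have "\<dots> = (\<Sum>k\<in>I. Z i k * Y k j)"
        by (rule sum.mono_neutral_left[OF fI KI]) (use b True in \<open>auto simp: bd_def\<close>)
      also have "\<dots> = one_mat I i j" using fun_cong[OF fun_cong[OF Z(3)], of i j] unfolding mmul_def by simp
      finally show ?thesis using True KI by (auto simp: one_mat_def)
    next
      case False
      then show ?thesis by (auto simp: mmul_def restr_def one_mat_def)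
    qed
  qed
  show ?thesis unfolding GL_def using m1 m2 restr_mat_on by blast
qed

lemma ext_mmul:
  assumes fI: "finite I" and KI: "K \<subseteq> I" and x: "mat_on K x" and y: "mat_on K y"
  shows "mmul I (ext I K x) (ext I K y) = ext I K (mmul K (x::('i,'f::field) mat) y)"
proof (intro ext)
  fix i j
  show "mmul I (ext I K x) (ext I K y) i j = ext I K (mmul K x y) i j"
  proof (cases "i \<in> K")
    case False
    have "mmul I (ext I K x) (ext I K y) i j = ext I K y i j"
      by (rule mmul_row_id[OF fI ext_mat_on[OF KI]]) (use False in \<open>simp add: ext_def\<close>)
    then show ?thesis using False by (simp add: ext_def)
  next
    case iK: True
    show ?thesis
    proof (cases "j \<in> K")
      case False
      have "mmul I (ext I K x) (ext I K y) i j = ext I K x i j"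
        by (rule mmul_col_id[OF fI ext_mat_on[OF KI]]) (use False in \<open>simp add: ext_def\<close>)
      then show ?thesis using False by (simp add: ext_def)
    next
      case jK: True
      have "mmul I (ext I K x) (ext I K y) i j = (\<Sum>k\<in>K. x i k * y k j)"
        unfolding mmul_def
      proof (rule sum.mono_neutral_cong_right[OF fI KI])
        show "\<forall>k\<in>I - K. ext I K x i k * ext I K y k j = 0"
          using iK by (auto simp: ext_def one_mat_def)
        show "\<And>k. k \<in> K \<Longrightarrow> ext I K x i k * ext I K y k j = x i k * y k j"
          using iK jK by (auto simp: ext_def)
      qed
      then show ?thesis using iK jK by (simp add: ext_def mmul_def)
    qed
  qed
qed

lemma ext_one: "K \<subseteq> I \<Longrightarrow> ext I K (one_mat K) = one_mat I"
  by (auto simp: ext_def one_mat_def intro!: ext)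

lemma ext_GL:
  assumes fI: "finite I" and KI: "K \<subseteq> I" and x: "x \<in> GL K"
  shows "ext I K x \<in> (GL I :: ('i,'f::field) mat set)"
proof -
  obtain y where y: "mat_on K y" "mmul K x y = one_mat K" "mmul K y x = one_mat K" using GL_inv[OF x] by blast
  have mx: "mat_on K x" using x GL_mat_on by blast
  have 1: "mmul I (ext I K x) (ext I K y) = one_mat I" using ext_mmul[OF fI KI mx y(1)] y(2) ext_one[OF KI] by simp
  have 2: "mmul I (ext I K y) (ext I K x) = one_mat I" using ext_mmul[OF fI KI y(1) mx] y(3) ext_one[OF KI] by simp
  show ?thesis unfolding GL_def using ext_mat_on[OF KI] 1 2 by blast
qed

lemma bd_split:
  assumes fI: "finite I" and KI: "K \<subseteq> I" and Y: "mat_on I Y" and b: "bd K Y"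
  shows "Y = mmul I (ext I K (restr K Y)) (ext I (I - K) (restr (I - K) (Y::('i,'f::field) mat)))"
proof (intro ext)
  fix i j
  let ?a = "ext I K (restr K Y)" and ?b = "ext I (I - K) (restr (I - K) Y)"
  have ma: "mat_on I ?a" and mb: "mat_on I ?b" using ext_mat_on[of K I] ext_mat_on[of "I - K" I] KI by auto
  show "Y i j = mmul I ?a ?b i j"
  proof (cases "i \<in> K")
    case False
    have "mmul I ?a ?b i j = ?b i j"
      by (rule mmul_row_id[OF fI mb]) (use False in \<open>simp add: ext_def\<close>)
    also have "\<dots> = Y i j" using False b Y by (auto simp: ext_def restr_def one_mat_def bd_def mat_on_def)
    finally show ?thesis by simp
  next
    case iK: True
    show ?thesis
    proof (cases "j \<in> K")
      case True
      have "mmul I ?a ?b i j = ?a i j"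
        by (rule mmul_col_id[OF fI ma]) (use True in \<open>simp add: ext_def\<close>)
      then show ?thesis using iK True by (simp add: ext_def restr_def)
    next
      case False
      have "mmul I ?a ?b i j = 0" unfolding mmul_def
        by (rule sum.neutral) (use iK False in \<open>auto simp: ext_def restr_def one_mat_def\<close>)
      moreover have "Y i j = 0" using b iK False by (auto simp: bd_def)
      ultimately show ?thesis by simp
    qed
  qed
qed

lemma blk_combine:
  assumes fI: "finite I" and JI: "J \<subseteq> I" and h: "mat_on I h" and b: "bd J h" and x: "mat_on J x"
  shows "(\<lambda>i j. if i \<in> J \<and> j \<in> J then mmul J (restr J h) x i j else h i j) = mmul I h (ext I J (x::('i,'f::field) mat))"
proof (intro ext)
  fix i j
  show "(if i \<in> J \<and> j \<in> J then mmul J (restr J h) x i j else h i j) = mmul I h (ext I J x) i j"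
  proof (cases "j \<in> J")
    case False
    have "mmul I h (ext I J x) i j = h i j"
      by (rule mmul_col_id[OF fI h]) (use False in \<open>simp add: ext_def\<close>)
    then show ?thesis using False by simp
  next
    case jJ: True
    show ?thesis
    proof (cases "i \<in> J")
      case True
      have "mmul I h (ext I J x) i j = (\<Sum>k\<in>J. h i k * x k j)"
        unfolding mmul_def
      proof (rule sum.mono_neutral_cong_right[OF fI JI])
        show "\<forall>k\<in>I - J. h i k * ext I J x k j = 0"
          using jJ by (auto simp: ext_def one_mat_def)
        show "\<And>k. k \<in> J \<Longrightarrow> h i k * ext I J x k j = h i k * x k j"
          using jJ by (auto simp: ext_def)
      qed
      moreover have "mmul J (restr J h) x i j = (\<Sum>k\<in>J. h i k * x k j)"
        unfolding mmul_def restr_def using True by simp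
      ultimately show ?thesis using True jJ by simp
    next
      case False
      have "mmul I h (ext I J x) i j = 0" unfolding mmul_def
        by (rule sum.neutral) (use False jJ b in \<open>auto simp: ext_def one_mat_def bd_def\<close>)
      moreover have "h i j = 0" using b False jJ by (auto simp: bd_def)
      ultimately show ?thesis using False by simp
    qed
  qed
qed

definition dpart :: "('i \<times> 'i) set \<Rightarrow> ('i,'f::zero) mat \<Rightarrow> ('i,'f) mat" where
  "dpart E w = (\<lambda>i j. if (i,j) \<in> E then w i j else 0)"

lemma UT_nz:
  assumes "w \<in> UT I Q" "Id_on I \<subseteq> Q" "w i k \<noteq> 0"
  shows "(i,k) \<in> Q"
proof (rule ccontr)
  assume a: "(i,k) \<notin> Q"
  then have "w i k = one_mat I i k" using UT_out[OF assms(1)] by blast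
  then have "i \<in> I" "i = k" using assms(3) by (auto simp: one_mat_def split: if_splits)
  then show False using a assms(2) Id_onI by blast
qed

lemma dpart_mmul:
  assumes IE: "Id_on I \<subseteq> E" and EQ: "E \<subseteq> Q" and trE: "trans E"
    and cv: "\<And>i k j. (i,k) \<in> Q \<Longrightarrow> (k,j) \<in> Q \<Longrightarrow> (i,j) \<in> E \<Longrightarrow> (i,k) \<in> E \<and> (k,j) \<in> E"
    and w: "w \<in> UT I Q" and z: "z \<in> UT I Q"
  shows "mmul I (dpart E w) (dpart E z) = dpart E (mmul I w (z::('i,'f::field) mat))"
proof (intro ext)
  fix i j
  have IQ: "Id_on I \<subseteq> Q" using IE EQ by blast
  show "mmul I (dpart E w) (dpart E z) i j = dpart E (mmul I w z) i j"
  proof (cases "(i,j) \<in> E")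
    case True
    have "mmul I (dpart E w) (dpart E z) i j = mmul I w z i j"
      unfolding mmul_def
    proof (rule sum.cong[OF refl])
      fix k
      show "dpart E w i k * dpart E z k j = w i k * z k j"
      proof (cases "w i k \<noteq> 0 \<and> z k j \<noteq> 0")
        case True
        then have "(i,k) \<in> Q" "(k,j) \<in> Q" using UT_nz[OF w IQ] UT_nz[OF z IQ] by auto
        then have "(i,k) \<in> E" "(k,j) \<in> E" using cv \<open>(i,j) \<in> E\<close> by blast+
        then show ?thesis by (simp add: dpart_def)
      next
        case False
        then show ?thesis by (auto simp: dpart_def)
      qed
    qed
    then show ?thesis using True by (simp add: dpart_def)
  next
    case False
    have "mmul I (dpart E w) (dpart E z) i j = 0" unfolding mmul_def
    proof (rule sum.neutral, rule ballI)
      fix k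
      show "dpart E w i k * dpart E z k j = 0"
        using False trE unfolding dpart_def by (auto dest: transD)
    qed
    then show ?thesis using False by (simp add: dpart_def)
  qed
qed

lemma dpart_one: "Id_on I \<subseteq> E \<Longrightarrow> dpart E (one_mat I) = one_mat I"
  using Id_onI by (fastforce simp: dpart_def one_mat_def intro!: ext)

lemma dpart_GL:
  assumes fI: "finite I" and IE: "Id_on I \<subseteq> E" and EQ: "E \<subseteq> Q" and trE: "trans E" and trQ: "trans Q"
    and cv: "\<And>i k j. (i,k) \<in> Q \<Longrightarrow> (k,j) \<in> Q \<Longrightarrow> (i,j) \<in> E \<Longrightarrow> (i,k) \<in> E \<and> (k,j) \<in> E"
    and w: "w \<in> UT I Q"
  shows "dpart E w \<in> (GL I :: ('i,'f::{field,finite}) mat set)"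
proof -
  obtain z where z: "z \<in> UT I Q" "mmul I w z = one_mat I" "mmul I z w = one_mat I"
    using fgrp_inv[OF fI UT_fgrp[OF fI trQ] w] by blast
  have m: "mat_on I (dpart E v)" if "mat_on I v" for v :: "('i,'f) mat"
    using that by (auto simp: mat_on_def dpart_def)
  have 1: "mmul I (dpart E w) (dpart E z) = one_mat I"
    using dpart_mmul[OF IE EQ trE cv w z(1)] z(2) dpart_one[OF IE] by simp
  have 2: "mmul I (dpart E z) (dpart E w) = one_mat I"
    using dpart_mmul[OF IE EQ trE cv z(1) w] z(3) dpart_one[OF IE] by simp
  show ?thesis unfolding GL_def
    using m[OF GL_mat_on[OF UT_GL[OF w]]] m[OF GL_mat_on[OF UT_GL[OF z(1)]]] 1 2 by blast
qed

definition uniq :: "'i set list \<Rightarrow> bool" where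
  "uniq C \<longleftrightarrow> (\<forall>r s i. r < length C \<longrightarrow> s < length C \<longrightarrow> i \<in> C ! r \<longrightarrow> i \<in> C ! s \<longrightarrow> r = s)"

lemma sc_uniq: assumes "set_composition I C" shows "uniq C"
  unfolding uniq_def
proof (intro allI impI)
  fix r s i assume a: "r < length C" "s < length C" "i \<in> C ! r" "i \<in> C ! s"
  have d: "\<And>r s. r < s \<Longrightarrow> s < length C \<Longrightarrow> C ! r \<inter> C ! s = {}"
    using assms unfolding set_composition_def by blast
  show "r = s"
  proof (rule ccontr)
    assume "r \<noteq> s"
    then consider "r < s" | "s < r" by linarith
    then show False
    proof cases
      case 1 then show False using d[OF 1 a(2)] a(3,4) by blast
    next
      case 2 then show False using d[OF 2 a(1)] a(3,4) by blast
    qed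
  qed
qed

lemma uniqD: "uniq C \<Longrightarrow> r < length C \<Longrightarrow> s < length C \<Longrightarrow> i \<in> C ! r \<Longrightarrow> i \<in> C ! s \<Longrightarrow> r = s"
  unfolding uniq_def by blast

lemma Eq_iff: "(i,j) \<in> Eq C \<longleftrightarrow> (\<exists>r. r < length C \<and> i \<in> C ! r \<and> j \<in> C ! r)"
  unfolding Eq_def by simp

lemma Asc_iff: "(i,j) \<in> Asc C \<longleftrightarrow> (\<exists>r s. r < s \<and> s < length C \<and> i \<in> C ! r \<and> j \<in> C ! s)"
  unfolding Asc_def by simp

lemma EA_iff: "(i,j) \<in> Eq C \<union> Asc C \<longleftrightarrow> (\<exists>r s. r \<le> s \<and> s < length C \<and> i \<in> C ! r \<and> j \<in> C ! s)"
proof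
  assume "(i,j) \<in> Eq C \<union> Asc C"
  then consider "(i,j) \<in> Eq C" | "(i,j) \<in> Asc C" by blast
  then show "\<exists>r s. r \<le> s \<and> s < length C \<and> i \<in> C ! r \<and> j \<in> C ! s"
  proof cases
    case 1
    then obtain r where "r < length C" "i \<in> C ! r" "j \<in> C ! r" unfolding Eq_def by auto
    then show ?thesis by blast
  next
    case 2
    then obtain r s where "r < s" "s < length C" "i \<in> C ! r" "j \<in> C ! s" unfolding Asc_def by auto
    then show ?thesis using less_imp_le by blast
  qed
next
  assume "\<exists>r s. r \<le> s \<and> s < length C \<and> i \<in> C ! r \<and> j \<in> C ! s"
  then obtain r s where rs: "r \<le> s" "s < length C" "i \<in> C ! r" "j \<in> C ! s" by blast
  show "(i,j) \<in> Eq C \<union> Asc C"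
  proof (cases "r = s")
    case True then have "(i,j) \<in> Eq C" using rs unfolding Eq_iff by blast
    then show ?thesis by blast
  next
    case False then have "r < s" using rs by simp
    then have "(i,j) \<in> Asc C" using rs unfolding Asc_iff by blast
    then show ?thesis by blast
  qed
qed

lemma uniq_trans_EA: assumes u: "uniq C" shows "trans (Eq C \<union> Asc C)"
proof (rule transI)
  fix i j k assume "(i,j) \<in> Eq C \<union> Asc C" "(j,k) \<in> Eq C \<union> Asc C"
  then obtain r s r' s' where a: "r \<le> s" "s < length C" "i \<in> C ! r" "j \<in> C ! s"
    and b: "r' \<le> s'" "s' < length C" "j \<in> C ! r'" "k \<in> C ! s'" unfolding EA_iff by blast
  have "s = r'" using uniqD[OF u a(2) _ a(4) b(3)] b(1,2) by simp
  then show "(i,k) \<in> Eq C \<union> Asc C" unfolding EA_iff using a b by (intro exI[of _ r] exI[of _ s']) auto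
qed

lemma uniq_trans_Asc: assumes u: "uniq C" shows "trans (Asc C)"
proof (rule transI)
  fix i j k assume "(i,j) \<in> Asc C" "(j,k) \<in> Asc C"
  then obtain r s r' s' where a: "r < s" "s < length C" "i \<in> C ! r" "j \<in> C ! s"
    and b: "r' < s'" "s' < length C" "j \<in> C ! r'" "k \<in> C ! s'" unfolding Asc_iff by blast
  have "s = r'" using uniqD[OF u a(2) _ a(4) b(3)] b(1,2) by simp
  then show "(i,k) \<in> Asc C" unfolding Asc_iff using a b by (intro exI[of _ r] exI[of _ s']) auto
qed

lemma uniq_trans_Eq: assumes u: "uniq C" shows "trans (Eq C)"
proof (rule transI)
  fix i j k assume "(i,j) \<in> Eq C" "(j,k) \<in> Eq C"
  then obtain r r' where a: "r < length C" "i \<in> C ! r" "j \<in> C ! r"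
    and b: "r' < length C" "j \<in> C ! r'" "k \<in> C ! r'" unfolding Eq_iff by blast
  have "r = r'" using uniqD[OF u a(1) b(1) a(3) b(2)] .
  then show "(i,k) \<in> Eq C" unfolding Eq_iff using a b by blast
qed

lemma Eq_sym: "(i,j) \<in> Eq C \<Longrightarrow> (j,i) \<in> Eq C"
  unfolding Eq_iff by blast

lemma uniq_cv:
  assumes u: "uniq C" and ik: "(i,k) \<in> Eq C \<union> Asc C" and kj: "(k,j) \<in> Eq C \<union> Asc C" and ij: "(i,j) \<in> Eq C"
  shows "(i,k) \<in> Eq C \<and> (k,j) \<in> Eq C"
proof -
  obtain r s where a: "r \<le> s" "s < length C" "i \<in> C ! r" "k \<in> C ! s" using ik unfolding EA_iff by blast
  obtain r' s' where b: "r' \<le> s'" "s' < length C" "k \<in> C ! r'" "j \<in> C ! s'" using kj unfolding EA_iff by blast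
  obtain t where c: "t < length C" "i \<in> C ! t" "j \<in> C ! t" using ij unfolding Eq_iff by blast
  have 1: "s = r'" using uniqD[OF u a(2) _ a(4) b(3)] b(1,2) by simp
  have 2: "r = t" using uniqD[OF u _ c(1) a(3) c(2)] a(1,2) by simp
  have 3: "s' = t" using uniqD[OF u b(2) c(1) b(4) c(3)] .
  have "r = s" "r' = s'" using 1 2 3 a(1) b(1) by auto
  then show ?thesis unfolding Eq_iff using a b by auto
qed

lemma uniq_EqAsc:
  assumes u: "uniq C" and ik: "(i,k) \<in> Eq C" and kj: "(k,j) \<in> Asc C"
  shows "(i,j) \<in> Asc C"
proof -
  obtain r where a: "r < length C" "i \<in> C ! r" "k \<in> C ! r" using ik unfolding Eq_iff by blast
  obtain r' s' where b: "r' < s'" "s' < length C" "k \<in> C ! r'" "j \<in> C ! s'" using kj unfolding Asc_iff by blast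
  have "r = r'" using uniqD[OF u a(1) _ a(3) b(3)] b(1,2) by simp
  then show ?thesis unfolding Asc_iff using a b by blast
qed

lemma trans_Id_on_Un: "trans R \<Longrightarrow> trans (Id_on K \<union> R)"
  unfolding trans_def Id_on_def by blast

lemma trans_Times: "trans (J \<times> J)"
  unfolding trans_def by blast

lemma UT_empty:
  assumes fI: "finite I"
  shows "UT I {} = {one_mat I :: ('i,'f::field) mat}"
proof (rule equalityI)
  show "UT I {} \<subseteq> {one_mat I :: ('i,'f) mat}"
  proof
    fix X :: "('i,'f) mat" assume X: "X \<in> UT I {}"
    have "X = one_mat I"
    proof (intro ext)
      fix i j show "X i j = one_mat I i j" using UT_out[OF X, of i j] by simp
    qed
    then show "X \<in> {one_mat I}" by simp
  qed
  show "{one_mat I} \<subseteq> (UT I {} :: ('i,'f) mat set)" using one_UT[OF fI] by simp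
qed

lemma avg_single: "avg {a} f = f a"
  by (simp add: avg_def)

lemma avg_reindex: "inj_on g S \<Longrightarrow> avg (g ` S) f = avg S (\<lambda>x. f (g x))"
  unfolding avg_def by (simp add: card_image sum.reindex)

lemma avg_cong: "(\<And>x. x \<in> S \<Longrightarrow> f x = f' x) \<Longrightarrow> avg S f = avg S f'"
  unfolding avg_def by simp

lemma Resf_avg: "Resf K \<sigma> C \<phi> g = avg (UR K \<sigma> C) (\<lambda>x. Res (UP K \<sigma> C) \<phi> (mmul K g x))"
  by (simp add: Resf_def Deflate_def avg_def)

lemma tensor_maps_Nil: "tensor_maps [] = id"
  by (simp add: tensor_maps_def)

lemma tensor_maps_Cons: "tensor_maps ((J,F) # xs) = blk_apply J F \<circ> tensor_maps xs"
  by (simp add: tensor_maps_def)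

lemma blk_apply_eq: "blk_apply J F \<psi> h = F (\<lambda>g. \<psi> (\<lambda>i j. if i \<in> J \<and> j \<in> J then g i j else h i j)) (restr J h)"
  by (simp add: blk_apply_def restr_def)

locale blkctx =
  fixes I :: "'i set" and \<tau> :: "('i \<times> 'i) set" and A B :: "'i set list"
  assumes fI: "finite I" and tot: "total_order_of I \<tau>"
    and cA: "set_composition I A" and cB: "set_composition I B" and rf: "refines B A"
begin

lemma tau_refl: "i \<in> I \<Longrightarrow> (i,i) \<in> \<tau>"
  using tot by (simp add: total_order_of_def)

lemma tau_trans: "trans \<tau>"
  using tot unfolding total_order_of_def trans_def by blast

lemma uA: "uniq A" using sc_uniq[OF cA] .
lemma uB: "uniq B" using sc_uniq[OF cB] .
lemma UA: "\<Union>(set A) = I" using cA by (simp add: set_composition_def)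
lemma UB: "\<Union>(set B) = I" using cB by (simp add: set_composition_def)

lemma A_sub: "X \<in> set A \<Longrightarrow> X \<subseteq> I" using UA by blast

lemma A_disj:
  assumes "X \<in> set A" "Y \<in> set A" "X \<noteq> Y"
  shows "X \<inter> Y = {}"
proof (rule ccontr)
  assume "X \<inter> Y \<noteq> {}"
  then obtain i where i: "i \<in> X" "i \<in> Y" by blast
  obtain r where r: "r < length A" "A ! r = X" using assms(1) by (meson in_set_conv_nth)
  obtain s where s: "s < length A" "A ! s = Y" using assms(2) by (meson in_set_conv_nth)
  have "r = s" using uniqD[OF uA r(1) s(1)] i r(2) s(2) by blast
  then show False using r s assms(3) by simp
qed

lemma A_sorted: "sorted_wrt (\<lambda>X Y. X \<inter> Y = {}) A"
proof -
  have "\<forall>r s. r < s \<and> s < length A \<longrightarrow> A ! r \<inter> A ! s = {}" using cA by (simp add: set_composition_def)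
  then show ?thesis by (simp add: sorted_wrt_iff_nth_less)
qed

lemma IdI_EqB: "i \<in> I \<Longrightarrow> (i,i) \<in> Eq B"
  using UB unfolding Eq_set by blast
lemma IdI_EqA: "i \<in> I \<Longrightarrow> (i,i) \<in> Eq A"
  using UA unfolding Eq_set by blast

lemma rfB: "B = concat (map (comp_restr B) A)"
  using rf by (simp add: refines_def)

lemma EqB_EqA: "Eq B \<subseteq> Eq A"
proof -
  have "Eq (concat (map (comp_restr B) A)) \<subseteq> Eq A"
    by (rule refine_Eq) (simp add: Union_comp_restr)
  then show ?thesis using rfB by simp
qed

lemma AscB_sub: "Asc B \<subseteq> Eq A \<union> Asc A"
proof -
  have "Asc (concat (map (comp_restr B) A)) \<subseteq> Eq A \<union> Asc A"
    by (rule refine_Asc1) (simp add: Union_comp_restr)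
  then show ?thesis using rfB by simp
qed

lemma AscA_sub: "Asc A \<subseteq> Asc B"
proof -
  have "Asc A \<subseteq> Asc (concat (map (comp_restr B) A))"
    by (rule refine_Asc2) (use UB A_sub in \<open>auto simp: Union_comp_restr\<close>)
  then show ?thesis using rfB by simp
qed

lemma EqA_block1:
  assumes J: "J \<in> set A" and i: "i \<in> J" and ij: "(i,j) \<in> Eq A"
  shows "j \<in> J"
proof -
  obtain X where X: "X \<in> set A" "i \<in> X" "j \<in> X" using ij unfolding Eq_set by blast
  have "X = J"
  proof (rule ccontr)
    assume "X \<noteq> J"
    then have "X \<inter> J = {}" using A_disj X(1) J by blast
    then show False using X(2) i by blast
  qed
  then show ?thesis using X(3) by simp
qed
lemma EqA_block2:
  assumes J: "J \<in> set A" and j: "j \<in> J" and ij: "(i,j) \<in> Eq A"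
  shows "i \<in> J"
  using EqA_block1[OF J j Eq_sym[OF ij]] .
lemma JJ_EqA: "J \<in> set A \<Longrightarrow> J \<times> J \<subseteq> Eq A"
  unfolding Eq_set by blast

definition relP where "relP = \<tau> \<inter> (Eq B \<union> Asc B) \<inter> Eq A"
definition relG where "relG Js = Id_on (\<Union>(set Js)) \<union> (\<tau> \<inter> Asc B \<inter> Eq Js)"
definition relW where "relW J = Id_on J \<union> (\<tau> \<inter> Asc B \<inter> J \<times> J)"
definition relUP where "relUP J = \<tau> \<inter> (Eq B \<union> Asc B) \<inter> J \<times> J"

lemma trP: "trans relP"
  unfolding relP_def by (intro trans_Int tau_trans uniq_trans_EA uniq_trans_Eq uA uB)

lemma trEqJs:
  assumes "set Js \<subseteq> set A" shows "trans (Eq Js)"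
proof (rule transI)
  fix i j k assume "(i,j) \<in> Eq Js" "(j,k) \<in> Eq Js"
  then obtain X Y where XY: "X \<in> set Js" "i \<in> X" "j \<in> X" "Y \<in> set Js" "j \<in> Y" "k \<in> Y" unfolding Eq_set by blast
  have "X = Y" using A_disj XY assms by blast
  then show "(i,k) \<in> Eq Js" unfolding Eq_set using XY by blast
qed

lemma trG: "set Js \<subseteq> set A \<Longrightarrow> trans (relG Js)"
  unfolding relG_def by (intro trans_Id_on_Un trans_Int tau_trans uniq_trans_Asc uB trEqJs)

lemma trW: "trans (relW J)"
  unfolding relW_def by (intro trans_Id_on_Un trans_Int tau_trans uniq_trans_Asc uB trans_Times)

lemma trUP: "trans (relUP J)"
  unfolding relUP_def by (intro trans_Int tau_trans uniq_trans_EA uB trans_Times)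

lemma UR_J: "UR J (rel_restr \<tau> J) (comp_restr B J) = UT J (relW J)"
proof -
  have "Id_on J \<union> (rel_restr \<tau> J \<inter> Asc (comp_restr B J)) = relW J"
    unfolding relW_def rel_restr_def Asc_comp_restr by blast
  then show ?thesis by (simp add: UR_def)
qed

lemma UP_J: "UP J (rel_restr \<tau> J) (comp_restr B J) = UT J (relUP J)"
proof -
  have "rel_restr \<tau> J \<inter> (Eq (comp_restr B J) \<union> Asc (comp_restr B J)) = relUP J"
    unfolding relUP_def rel_restr_def Asc_comp_restr Eq_comp_restr by blast
  then show ?thesis by (simp add: UP_def)
qed

definition P :: "('i,'f::field) mat set" where "P = UT I relP"
definition Gs :: "'i set list \<Rightarrow> ('i,'f::field) mat set" where "Gs Js = UT I (relG Js)"

lemma P_bd: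
  assumes h: "h \<in> P" and J: "J \<in> set A"
  shows "bd J h"
  unfolding bd_def
proof (intro allI impI)
  fix i j assume ne: "(i \<in> J) \<noteq> (j \<in> J)"
  have "(i,j) \<notin> Eq A"
  proof
    assume ij: "(i,j) \<in> Eq A"
    show False
    proof (cases "i \<in> J")
      case True then show False using EqA_block1[OF J True ij] ne by simp
    next
      case False then show False using EqA_block2[OF J _ ij] ne by auto
    qed
  qed
  then have "(i,j) \<notin> relP" unfolding relP_def by blast
  then have "h i j = one_mat I i j" by (rule UT_out[OF h[unfolded P_def]])
  moreover have "i \<noteq> j" using ne by auto
  ultimately show "h i j = 0" by (simp add: one_mat_def)
qed

lemma P_mmul: "h \<in> P \<Longrightarrow> g \<in> P \<Longrightarrow> mmul I h g \<in> P"
  unfolding P_def using UT_mmul[OF fI trP] by blast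

lemma restr_in_UPJ:
  assumes h: "h \<in> P" and J: "J \<in> set A"
  shows "restr J h \<in> UT J (relUP J)"
  unfolding UT_iff
proof (intro conjI allI impI)
  have JI: "J \<subseteq> I" using A_sub J by blast
  show "restr J h \<in> GL J"
    using restr_GL[OF fI JI UT_GL[OF h[unfolded P_def]] P_bd[OF h J]] .
  fix i j assume nij: "(i,j) \<notin> relUP J"
  show "restr J h i j = one_mat J i j"
  proof (cases "i \<in> J \<and> j \<in> J")
    case True
    then have "(i,j) \<notin> relP" using nij unfolding relP_def relUP_def by blast
    then have "h i j = one_mat I i j" by (rule UT_out[OF h[unfolded P_def]])
    then show ?thesis using True JI by (auto simp: restr_def one_mat_def)
  next
    case False
    then show ?thesis by (auto simp: restr_def one_mat_def)
  qed
qed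

lemma W_sub_UP: "J \<in> set A \<Longrightarrow> UT J (relW J) \<subseteq> (UT J (relUP J) :: ('i,'f::field) mat set)"
  by (rule UT_mono) (use A_sub tau_refl IdI_EqB in \<open>auto simp: relW_def relUP_def\<close>)

lemma ext_in_P:
  assumes J: "J \<in> set A" and x: "x \<in> UT J (relW J)"
  shows "ext I J x \<in> P"
  unfolding P_def UT_iff
proof (intro conjI allI impI)
  have JI: "J \<subseteq> I" using A_sub J by blast
  show "ext I J x \<in> GL I" using ext_GL[OF fI JI UT_GL[OF x]] .
  fix i j assume nij: "(i,j) \<notin> relP"
  show "ext I J x i j = one_mat I i j"
  proof (cases "i \<in> J \<and> j \<in> J")
    case True
    then have "(i,j) \<in> Eq A" using JJ_EqA[OF J] by blast
    then have "(i,j) \<notin> relW J" using nij True JI tau_refl IdI_EqB unfolding relP_def relW_def by auto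
    then have "x i j = one_mat J i j" by (rule UT_out[OF x])
    then show ?thesis using True JI by (auto simp: ext_def one_mat_def)
  next
    case False
    then show ?thesis by (auto simp: ext_def)
  qed
qed

lemma ext_in_G:
  assumes J: "J \<in> set A" and x: "x \<in> UT J (relW J)"
  shows "ext I J x \<in> Gs (J # Js)"
  unfolding Gs_def UT_iff
proof (intro conjI allI impI)
  have JI: "J \<subseteq> I" using A_sub J by blast
  show "ext I J x \<in> GL I" using ext_GL[OF fI JI UT_GL[OF x]] .
  fix i j assume nij: "(i,j) \<notin> relG (J # Js)"
  show "ext I J x i j = one_mat I i j"
  proof (cases "i \<in> J \<and> j \<in> J")
    case True
    then have "(i,j) \<notin> relW J" using nij unfolding relG_def relW_def Eq_Cons by auto
    then have "x i j = one_mat J i j" by (rule UT_out[OF x])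
    then show ?thesis using True JI by (auto simp: ext_def one_mat_def)
  next
    case False
    then show ?thesis by (auto simp: ext_def)
  qed
qed

lemma G_mono: "Gs Js \<subseteq> Gs (J # Js)"
  unfolding Gs_def by (rule UT_mono) (auto simp: relG_def Eq_Cons)

lemma G_fgrp: "set Js \<subseteq> set A \<Longrightarrow> fgrp I (Gs Js :: ('i,'f::{field,finite}) mat set)"
  unfolding Gs_def by (rule UT_fgrp[OF fI trG])

lemma E_fgrp:
  assumes J: "J \<in> set A"
  shows "fgrp I (ext I J ` (UT J (relW J) :: ('i,'f::{field,finite}) mat set))"
  unfolding fgrp_def
proof (intro conjI ballI)
  have JI: "J \<subseteq> I" using A_sub J by blast
  have fJ: "finite J" using JI fI finite_subset by blast
  have W: "fgrp J (UT J (relW J) :: ('i,'f) mat set)" using UT_fgrp[OF fJ trW] .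
  then show "finite (ext I J ` (UT J (relW J) :: ('i,'f) mat set))" by (simp add: fgrp_def)
  show "ext I J ` UT J (relW J) \<subseteq> (GL I :: ('i,'f) mat set)" using ext_GL[OF fI JI] UT_GL by blast
  have "one_mat J \<in> (UT J (relW J) :: ('i,'f) mat set)" using one_UT[OF fJ] .
  then have "ext I J (one_mat J) \<in> ext I J ` (UT J (relW J) :: ('i,'f) mat set)" by (rule imageI)
  then show "one_mat I \<in> ext I J ` (UT J (relW J) :: ('i,'f) mat set)" by (simp only: ext_one[OF JI])
  fix a b assume a: "a \<in> ext I J ` (UT J (relW J) :: ('i,'f) mat set)" and b: "b \<in> ext I J ` (UT J (relW J) :: ('i,'f) mat set)"
  obtain x where x: "x \<in> UT J (relW J)" "a = ext I J x" using a by (rule imageE) (simp only:)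
  obtain y where y: "y \<in> UT J (relW J)" "b = ext I J y" using b by (rule imageE) (simp only:)
  note xy = x(1) y(1) x(2) y(2)
  have "mmul I a b = ext I J (mmul J x y)" using ext_mmul[OF fI JI GL_mat_on[OF UT_GL[OF xy(1)]] GL_mat_on[OF UT_GL[OF xy(2)]]] xy(3,4) by simp
  moreover have "mmul J x y \<in> UT J (relW J)" using UT_mmul[OF fJ trW xy(1,2)] .
  ultimately show "mmul I a b \<in> ext I J ` (UT J (relW J) :: ('i,'f) mat set)" by (simp only: image_eqI)
qed

lemma G_fac:
  assumes J: "J \<in> set A" and Js: "set Js \<subseteq> set A" and dj: "\<forall>X\<in>set Js. J \<inter> X = {}"
    and Y: "Y \<in> Gs (J # Js)"
  shows "restr J Y \<in> UT J (relW J) \<and> ext I (I - J) (restr (I - J) Y) \<in> Gs Js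
     \<and> Y = mmul I (ext I J (restr J Y)) (ext I (I - J) (restr (I - J) Y))"
proof (intro conjI)
  have JI: "J \<subseteq> I" using A_sub J by blast
  have YU: "Y \<in> UT I (relG (J # Js))" using Y unfolding Gs_def .
  have YGL: "Y \<in> GL I" using UT_GL[OF YU] .
  have Ym: "mat_on I Y" using GL_mat_on[OF YGL] .
  have bJ: "bd J Y" unfolding bd_def
  proof (intro allI impI)
    fix i j assume ne: "(i \<in> J) \<noteq> (j \<in> J)"
    have "(i,j) \<notin> Eq Js" using dj ne unfolding Eq_set by blast
    then have "(i,j) \<notin> relG (J # Js)" using ne unfolding relG_def Eq_Cons by auto
    then have "Y i j = one_mat I i j" by (rule UT_out[OF YU])
    then show "Y i j = 0" using ne by (auto simp: one_mat_def)
  qed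
  have bIJ: "bd (I - J) Y" unfolding bd_def
  proof (intro allI impI)
    fix i j assume ne: "(i \<in> I - J) \<noteq> (j \<in> I - J)"
    show "Y i j = 0"
    proof (cases "i \<in> I \<and> j \<in> I")
      case True
      then have "(i \<in> J) \<noteq> (j \<in> J)" using ne by blast
      then show ?thesis using bJ by (simp add: bd_def)
    next
      case False
      then show ?thesis using Ym by (auto simp: mat_on_def)
    qed
  qed
  show "restr J Y \<in> UT J (relW J)"
    unfolding UT_iff
  proof (intro conjI allI impI)
    show "restr J Y \<in> GL J" using restr_GL[OF fI JI YGL bJ] .
    fix i j assume nij: "(i,j) \<notin> relW J"
    show "restr J Y i j = one_mat J i j"
    proof (cases "i \<in> J \<and> j \<in> J")
      case True
      then have "(i,j) \<notin> relG (J # Js)" using nij unfolding relG_def relW_def Eq_Cons by auto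
      then have "Y i j = one_mat I i j" by (rule UT_out[OF YU])
      then show ?thesis using True JI by (auto simp: restr_def one_mat_def)
    next
      case False
      then show ?thesis by (auto simp: restr_def one_mat_def)
    qed
  qed
  show "ext I (I - J) (restr (I - J) Y) \<in> Gs Js"
    unfolding Gs_def UT_iff
  proof (intro conjI allI impI)
    have "restr (I - J) Y \<in> GL (I - J)" using restr_GL[OF fI _ YGL bIJ] by blast
    then show "ext I (I - J) (restr (I - J) Y) \<in> GL I" using ext_GL[OF fI] by blast
    fix i j assume nij: "(i,j) \<notin> relG Js"
    show "ext I (I - J) (restr (I - J) Y) i j = one_mat I i j"
    proof (cases "i \<in> I - J \<and> j \<in> I - J")
      case True
      then have "(i,j) \<notin> relG (J # Js)" using nij unfolding relG_def Eq_Cons by auto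
      then have "Y i j = one_mat I i j" by (rule UT_out[OF YU])
      then show ?thesis using True by (auto simp: ext_def restr_def)
    next
      case False
      then show ?thesis by (auto simp: ext_def)
    qed
  qed
  show "Y = mmul I (ext I J (restr J Y)) (ext I (I - J) (restr (I - J) Y))"
    using bd_split[OF fI JI Ym bJ] .
qed

end

lemma restr_ext: "mat_on J x \<Longrightarrow> restr J (ext I J x) = x"
  by (auto simp: restr_def ext_def mat_on_def intro!: ext)

context blkctx begin

lemma main_ind:
  assumes "set Js \<subseteq> set A" "sorted_wrt (\<lambda>X Y. X \<inter> Y = {}) Js"
  shows "\<forall>h\<in>(P :: ('i,'f::{field,finite}) mat set).
    tensor_maps (map (\<lambda>Ar. (Ar, Resf Ar (rel_restr \<tau> Ar) (comp_restr B Ar))) Js) \<phi> h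
    = avg (Gs Js) (\<lambda>X. \<phi> (mmul I h X))"
  using assms
proof (induction Js)
  case Nil
  have G0: "Gs [] = {one_mat I :: ('i,'f) mat}" unfolding Gs_def relG_def using UT_empty[OF fI] by simp
  show ?case
  proof
    fix h :: "('i,'f) mat" assume h: "h \<in> P"
    have hm: "mat_on I h" using GL_mat_on[OF UT_GL[OF h[unfolded P_def]]] .
    show "tensor_maps (map (\<lambda>Ar. (Ar, Resf Ar (rel_restr \<tau> Ar) (comp_restr B Ar))) []) \<phi> h
      = avg (Gs []) (\<lambda>X. \<phi> (mmul I h X))"
      by (simp add: G0 avg_single tensor_maps_Nil mmul_one_right[OF fI hm])
  qed
next
  case (Cons J Js')
  have J: "J \<in> set A" and Js': "set Js' \<subseteq> set A" using Cons.prems(1) by auto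
  have srt: "sorted_wrt (\<lambda>X Y. X \<inter> Y = {}) Js'" and dj: "\<forall>X\<in>set Js'. J \<inter> X = {}"
    using Cons.prems(2) by auto
  note IH = Cons.IH[OF Js' srt]
  have JI: "J \<subseteq> I" using A_sub J by blast
  have fJ: "finite J" using JI fI finite_subset by blast
  define T' where "T' = tensor_maps (map (\<lambda>Ar. (Ar, Resf Ar (rel_restr \<tau> Ar) (comp_restr B Ar))) Js') \<phi>"
  define W where "W = (UT J (relW J) :: ('i,'f) mat set)"
  define E where "E = ext I J ` W"
  show ?case
  proof
    fix h :: "('i,'f) mat" assume h: "h \<in> P"
    have hGL: "h \<in> GL I" using UT_GL[OF h[unfolded P_def]] .
    have hm: "mat_on I h" using GL_mat_on[OF hGL] .
    have hbd: "bd J h" using P_bd[OF h J] .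
    have s1: "tensor_maps (map (\<lambda>Ar. (Ar, Resf Ar (rel_restr \<tau> Ar) (comp_restr B Ar))) (J # Js')) \<phi> h
      = avg W (\<lambda>x. T' (mmul I h (ext I J x)))"
    proof -
      have "tensor_maps (map (\<lambda>Ar. (Ar, Resf Ar (rel_restr \<tau> Ar) (comp_restr B Ar))) (J # Js')) \<phi> h
        = Resf J (rel_restr \<tau> J) (comp_restr B J) (\<lambda>g. T' (\<lambda>i j. if i \<in> J \<and> j \<in> J then g i j else h i j)) (restr J h)"
        by (simp add: tensor_maps_Cons blk_apply_eq T'_def)
      also have "\<dots> = avg W (\<lambda>x. Res (UT J (relUP J)) (\<lambda>g. T' (\<lambda>i j. if i \<in> J \<and> j \<in> J then g i j else h i j)) (mmul J (restr J h) x))"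
        by (simp add: Resf_avg UR_J UP_J W_def)
      also have "\<dots> = avg W (\<lambda>x. T' (mmul I h (ext I J x)))"
      proof (rule avg_cong)
        fix x assume x: "x \<in> W"
        have xU: "x \<in> UT J (relUP J)" using W_sub_UP[OF J] x unfolding W_def by blast
        have "mmul J (restr J h) x \<in> UT J (relUP J)"
          by (rule UT_mmul[OF fJ trUP restr_in_UPJ[OF h J] xU])
        moreover have "mat_on J x" using GL_mat_on[OF UT_GL[OF xU]] .
        ultimately show "Res (UT J (relUP J)) (\<lambda>g. T' (\<lambda>i j. if i \<in> J \<and> j \<in> J then g i j else h i j)) (mmul J (restr J h) x)
          = T' (mmul I h (ext I J x))"
          using blk_combine[OF fI JI hm hbd] by (simp add: Res_def)
      qed
      finally show ?thesis .
    qed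
    have s2: "avg W (\<lambda>x. T' (mmul I h (ext I J x)))
      = avg W (\<lambda>x. avg (Gs Js') (\<lambda>X. \<phi> (mmul I h (mmul I (ext I J x) X))))"
    proof (rule avg_cong)
      fix x assume x: "x \<in> W"
      have "mmul I h (ext I J x) \<in> P" using P_mmul[OF h ext_in_P[OF J x[unfolded W_def]]] .
      then show "T' (mmul I h (ext I J x)) = avg (Gs Js') (\<lambda>X. \<phi> (mmul I h (mmul I (ext I J x) X)))"
        using IH unfolding T'_def by (simp add: mmul_assoc)
    qed
    have inj: "inj_on (ext I J) W"
    proof (rule inj_onI)
      fix x y assume "x \<in> W" "y \<in> W" "ext I J x = ext I J y"
      then show "x = y" using restr_ext[of J x I] restr_ext[of J y I] GL_mat_on UT_GL unfolding W_def by metis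
    qed
    have s3: "avg W (\<lambda>x. avg (Gs Js') (\<lambda>X. \<phi> (mmul I h (mmul I (ext I J x) X))))
      = avg E (\<lambda>e. avg (Gs Js') (\<lambda>X. \<phi> (mmul I h (mmul I e X))))"
      unfolding E_def by (rule avg_reindex[OF inj, symmetric])
    have ES: "E \<subseteq> Gs (J # Js')" unfolding E_def W_def using ext_in_G[OF J] by blast
    have fac: "\<forall>w\<in>Gs (J # Js'). \<exists>e\<in>E. \<exists>u\<in>Gs Js'. w = mmul I e u"
    proof
      fix w :: "('i,'f) mat" assume w: "w \<in> Gs (J # Js')"
      note F = G_fac[OF J Js' dj w]
      have "ext I J (restr J w) \<in> E" unfolding E_def W_def using F by blast
      then show "\<exists>e\<in>E. \<exists>u\<in>Gs Js'. w = mmul I e u" using F by blast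
    qed
    have s4: "avg E (\<lambda>e. avg (Gs Js') (\<lambda>X. \<phi> (mmul I h (mmul I e X))))
      = avg (Gs (J # Js')) (\<lambda>X. \<phi> (mmul I h X))"
      by (rule avg_factor[OF fI G_fgrp[OF Cons.prems(1)] _ G_fgrp[OF Js'] ES G_mono fac,
            of "\<lambda>X. \<phi> (mmul I h X)"])
         (unfold E_def W_def, rule E_fgrp[OF J])
    show "tensor_maps (map (\<lambda>Ar. (Ar, Resf Ar (rel_restr \<tau> Ar) (comp_restr B Ar))) (J # Js')) \<phi> h
      = avg (Gs (J # Js')) (\<lambda>X. \<phi> (mmul I h X))"
      using s1 s2 s3 s4 by simp
  qed
qed

end

context blkctx begin

lemma W_fac:
  assumes w: "w \<in> (UT I (Id_on I \<union> (\<tau> \<inter> Asc B)) :: ('i,'f::{field,finite}) mat set)"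
  shows "\<exists>X\<in>Gs A. \<exists>u\<in>UT I (Id_on I \<union> (\<tau> \<inter> Asc A)). w = mmul I X u"
proof -
  have IdE: "Id_on I \<subseteq> Eq A" using IdI_EqA by auto
  have wQ: "w \<in> UT I (Eq A \<union> Asc A)"
    using UT_mono[of "Id_on I \<union> (\<tau> \<inter> Asc B)" "Eq A \<union> Asc A" I] IdE AscB_sub w by blast
  define X where "X = dpart (Eq A) w"
  have XGL: "X \<in> (GL I :: ('i,'f) mat set)" unfolding X_def
    by (rule dpart_GL[OF fI IdE _ uniq_trans_Eq[OF uA] uniq_trans_EA[OF uA] uniq_cv[OF uA] wQ]) blast
  have relGA: "relG A = Id_on I \<union> (\<tau> \<inter> Asc B \<inter> Eq A)" unfolding relG_def UA ..
  have XG: "X \<in> Gs A"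
    unfolding Gs_def UT_iff
  proof (intro conjI allI impI)
    show "X \<in> GL I" using XGL .
    fix i j assume nij: "(i,j) \<notin> relG A"
    show "X i j = one_mat I i j"
    proof (cases "(i,j) \<in> Eq A")
      case True
      then have "(i,j) \<notin> Id_on I \<union> (\<tau> \<inter> Asc B)" using nij unfolding relGA by blast
      then have "w i j = one_mat I i j" by (rule UT_out[OF w])
      then show ?thesis using True by (simp add: X_def dpart_def)
    next
      case False
      then have "one_mat I i j = 0" using IdI_EqA by (auto simp: one_mat_def)
      then show ?thesis using False by (simp add: X_def dpart_def)
    qed
  qed
  obtain Z where Z: "Z \<in> Gs A" "mmul I X Z = one_mat I" "mmul I Z X = one_mat I"
    using fgrp_inv[OF fI G_fgrp[of A] XG] by blast
  have ZU: "Z \<in> UT I (relG A)" using Z(1) unfolding Gs_def .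
  have wm: "mat_on I w" using GL_mat_on[OF UT_GL[OF w]] .
  define u where "u = mmul I Z w"
  have wXu: "w = mmul I X u"
  proof -
    have "mmul I X u = mmul I (mmul I X Z) w" unfolding u_def by (simp only: mmul_assoc)
    also have "\<dots> = w" using Z(2) mmul_one_left[OF fI wm] by simp
    finally show ?thesis by simp
  qed
  have IdG: "Id_on I \<subseteq> relG A" unfolding relGA by blast
  have IdW: "Id_on I \<subseteq> Id_on I \<union> (\<tau> \<inter> Asc B)" by blast
  have Znz: "(i,k) \<in> Eq A \<and> (i,k) \<in> \<tau>" if "Z i k \<noteq> 0" for i k
  proof -
    have "(i,k) \<in> relG A" using UT_nz[OF ZU IdG that] .
    then show ?thesis unfolding relGA using IdI_EqA tau_refl by auto
  qed
  have wnz: "(k,j) \<in> Id_on I \<union> (\<tau> \<inter> Asc B)" if "w k j \<noteq> 0" for k j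
    using UT_nz[OF w IdW that] .
  have uU: "u \<in> UT I (Id_on I \<union> (\<tau> \<inter> Asc A))"
    unfolding UT_iff
  proof (intro conjI allI impI)
    show "u \<in> GL I" unfolding u_def using GL_mmul[OF fI UT_GL[OF ZU] UT_GL[OF w]] .
    fix i j assume nij: "(i,j) \<notin> Id_on I \<union> (\<tau> \<inter> Asc A)"
    show "u i j = one_mat I i j"
    proof (cases "(i,j) \<in> Eq A")
      case True
      have "u i j = (\<Sum>k\<in>I. Z i k * X k j)" unfolding u_def mmul_def
      proof (rule sum.cong[OF refl])
        fix k
        show "Z i k * w k j = Z i k * X k j"
        proof (cases "Z i k = 0")
          case False
          then have "(i,k) \<in> Eq A" using Znz by blast
          then have "(k,j) \<in> Eq A" using True uniq_trans_Eq[OF uA] Eq_sym by (meson transD)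
          then show ?thesis by (simp add: X_def dpart_def)
        qed simp
      qed
      also have "\<dots> = one_mat I i j" using fun_cong[OF fun_cong[OF Z(3)], of i j] unfolding mmul_def by simp
      finally show ?thesis .
    next
      case False
      have "u i j = 0" unfolding u_def mmul_def
      proof (rule sum.neutral, rule ballI)
        fix k assume "k \<in> I"
        show "Z i k * w k j = 0"
        proof (rule ccontr)
          assume "Z i k * w k j \<noteq> 0"
          then have Zk: "Z i k \<noteq> 0" and wk: "w k j \<noteq> 0" by auto
          have ik: "(i,k) \<in> Eq A" "(i,k) \<in> \<tau>" using Znz[OF Zk] by auto
          have kj: "(k,j) \<in> Id_on I \<union> (\<tau> \<inter> Asc B)" using wnz[OF wk] .
          show False
          proof (cases "k = j")
            case True then show False using ik False by simp
          next
            case kne: False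
            then have kj2: "(k,j) \<in> \<tau>" "(k,j) \<in> Asc B" using kj by auto
            have ijt: "(i,j) \<in> \<tau>" using ik(2) kj2(1) tau_trans by (meson transD)
            have "(k,j) \<in> Eq A \<union> Asc A" using kj2(2) AscB_sub by blast
            moreover have "(k,j) \<notin> Eq A" using ik(1) False uniq_trans_Eq[OF uA] by (meson transD)
            ultimately have "(k,j) \<in> Asc A" by blast
            then have "(i,j) \<in> Asc A" using uniq_EqAsc[OF uA ik(1)] by blast
            then show False using nij ijt by blast
          qed
        qed
      qed
      moreover have "one_mat I i j = 0" using False IdI_EqA by (auto simp: one_mat_def)
      ultimately show ?thesis by simp
    qed
  qed
  show ?thesis using XG uU wXu by blast
qed

end

context blkctx begin

lemma final:
  fixes \<psi> :: "('i,'f::{field,finite}) mat \<Rightarrow> complex"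
  assumes h: "h \<in> UL I \<tau> B"
  shows "tensor_maps (map (\<lambda>Ar. (Ar, Resf Ar (rel_restr \<tau> Ar) (comp_restr B Ar))) A) (Resf I \<tau> A \<psi>) h
     = Resf I \<tau> B \<psi> h"
proof -
  define relWB where "relWB = Id_on I \<union> (\<tau> \<inter> Asc B)"
  define relUA where "relUA = Id_on I \<union> (\<tau> \<inter> Asc A)"
  define relPA where "relPA = \<tau> \<inter> (Eq A \<union> Asc A)"
  define relPB where "relPB = \<tau> \<inter> (Eq B \<union> Asc B)"
  define WB where "WB = (UT I relWB :: ('i,'f) mat set)"
  define UA' where "UA' = (UT I relUA :: ('i,'f) mat set)"
  have URB: "UR I \<tau> B = WB" by (simp add: UR_def WB_def relWB_def)
  have URA: "UR I \<tau> A = UA'" by (simp add: UR_def UA'_def relUA_def)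
  have UPA: "UP I \<tau> A = UT I relPA" by (simp add: UP_def relPA_def)
  have UPB: "UP I \<tau> B = UT I relPB" by (simp add: UP_def relPB_def)
  have hU: "h \<in> UT I (\<tau> \<inter> Eq B)" using h by (simp add: UL_def)
  have hP: "h \<in> P" unfolding P_def
    using UT_mono[of "\<tau> \<inter> Eq B" relP I] hU EqB_EqA unfolding relP_def by blast
  have trWB: "trans relWB" unfolding relWB_def by (intro trans_Id_on_Un trans_Int tau_trans uniq_trans_Asc uB)
  have trUA: "trans relUA" unfolding relUA_def by (intro trans_Id_on_Un trans_Int tau_trans uniq_trans_Asc uA)
  have trPA: "trans relPA" unfolding relPA_def by (intro trans_Int tau_trans uniq_trans_EA uA)
  have trPB: "trans relPB" unfolding relPB_def by (intro trans_Int tau_trans uniq_trans_EA uB)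
  have relGA: "relG A = Id_on I \<union> (\<tau> \<inter> Asc B \<inter> Eq A)" unfolding relG_def UA ..
  have hPA: "h \<in> UT I relPA" using UT_mono[of "\<tau> \<inter> Eq B" relPA I] hU EqB_EqA unfolding relPA_def by blast
  have GPA: "Gs A \<subseteq> (UT I relPA :: ('i,'f) mat set)" unfolding Gs_def
    by (rule UT_mono) (use tau_refl IdI_EqA in \<open>auto simp: relGA relPA_def\<close>)
  have UPA': "UA' \<subseteq> UT I relPA" unfolding UA'_def
    by (rule UT_mono) (use tau_refl IdI_EqA in \<open>auto simp: relUA_def relPA_def\<close>)
  have hPB: "h \<in> UT I relPB" using UT_mono[of "\<tau> \<inter> Eq B" relPB I] hU unfolding relPB_def by blast
  have WPB: "WB \<subseteq> UT I relPB" unfolding WB_def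
    by (rule UT_mono) (use tau_refl IdI_EqB in \<open>auto simp: relWB_def relPB_def\<close>)
  have GW: "Gs A \<subseteq> WB" unfolding Gs_def WB_def
    by (rule UT_mono) (auto simp: relGA relWB_def)
  have UW: "UA' \<subseteq> WB" unfolding UA'_def WB_def
    by (rule UT_mono) (use AscA_sub in \<open>auto simp: relUA_def relWB_def\<close>)
  have fWB: "fgrp I WB" unfolding WB_def using UT_fgrp[OF fI trWB] .
  have fUA: "fgrp I UA'" unfolding UA'_def using UT_fgrp[OF fI trUA] .
  have fGA: "fgrp I (Gs A :: ('i,'f) mat set)" using G_fgrp[of A] by simp
  have fac: "\<forall>w\<in>WB. \<exists>X\<in>Gs A. \<exists>u\<in>UA'. w = mmul I X u"
    using W_fac unfolding WB_def UA'_def relWB_def relUA_def by blast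
  have "tensor_maps (map (\<lambda>Ar. (Ar, Resf Ar (rel_restr \<tau> Ar) (comp_restr B Ar))) A) (Resf I \<tau> A \<psi>) h
     = avg (Gs A) (\<lambda>X. Resf I \<tau> A \<psi> (mmul I h X))"
    using main_ind[OF _ A_sorted] hP by blast
  also have "\<dots> = avg (Gs A) (\<lambda>X. avg UA' (\<lambda>z. \<psi> (mmul I h (mmul I X z))))"
  proof (rule avg_cong)
    fix X :: "('i,'f) mat" assume X: "X \<in> Gs A"
    show "Resf I \<tau> A \<psi> (mmul I h X) = avg UA' (\<lambda>z. \<psi> (mmul I h (mmul I X z)))"
      unfolding Resf_avg URA
    proof (rule avg_cong)
      fix z :: "('i,'f) mat" assume z: "z \<in> UA'"
      have "mmul I (mmul I h X) z \<in> UT I relPA"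
        using UT_mmul[OF fI trPA UT_mmul[OF fI trPA hPA] ] X z GPA UPA' by blast
      then show "Res (UP I \<tau> A) \<psi> (mmul I (mmul I h X) z) = \<psi> (mmul I h (mmul I X z))"
        by (simp add: Res_def UPA mmul_assoc)
    qed
  qed
  also have "\<dots> = avg WB (\<lambda>w. \<psi> (mmul I h w))"
    by (rule avg_factor[OF fI fWB fGA fUA GW UW fac])
  also have "\<dots> = Resf I \<tau> B \<psi> h"
    unfolding Resf_avg URB
  proof (rule avg_cong)
    fix y :: "('i,'f) mat" assume y: "y \<in> WB"
    have "mmul I h y \<in> UT I relPB" using UT_mmul[OF fI trPB hPB] y WPB by blast
    then show "\<psi> (mmul I h y) = Res (UP I \<tau> B) \<psi> (mmul I h y)"
      by (simp add: Res_def UPB)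
  qed
  finally show ?thesis .
qed

end

theorem proposition4p8:
  fixes I :: "'i set" and \<tau> :: "('i \<times> 'i) set" and A B :: "'i set list"
    and \<psi> :: "('i,'f::{field,finite}) mat \<Rightarrow> complex"
  assumes "finite I"
    and "total_order_of I \<tau>"
    and "set_composition I A"
    and "set_composition I B"
    and "refines B A"
    and "class_fun I (UT I \<tau>) \<psi>"
  shows "\<forall>h \<in> UL I \<tau> B.
     (tensor_maps (map (\<lambda>Ar. (Ar, Resf Ar (rel_restr \<tau> Ar) (comp_restr B Ar))) A)
        (Resf I \<tau> A \<psi>)) h
     = Resf I \<tau> B \<psi> h"
proof
  interpret blkctx I \<tau> A B using assms(1-5) by (unfold_locales)
  fix h :: "('i,'f) mat" assume "h \<in> UL I \<tau> B"
  then show "(tensor_maps (map (\<lambda>Ar. (Ar, Resf Ar (rel_restr \<tau> Ar) (comp_restr B Ar))) A)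
        (Resf I \<tau> A \<psi>)) h = Resf I \<tau> B \<psi> h" by (rule final)
qed

end
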